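(* Let $J$ be an arbitrary graph and let $m\ge\chi(J)$ be an integer. Then there exists a graph $G$ such that (1) $J$ is an induced subgraph of $G$; (2) $\dim_l(G)=m$; and (3) there exists a local metric basis $B$ of $G$ with $B\cap V(J)=\emptyset$.
   Context: $\chi(J)$ is the chromatic number of $J$. For a connected graph $G$, a vertex $w$ distinguishes an edge $uv$ if $d(w,u)\neq d(w,v)$ (shortest-path distance); a local metric basis of $G$ is a minimum-size set of vertices such that every edge of $G$ is distinguished by one of them, and $\dim_l(G)$ is its size. *)

theory Defs
  imports Main
begin

type_synonym 'a graph = "'a set \<times> 'a set set"

definition verts :: "'a graph \<Rightarrow> 'a set" where "verts G = fst G"
definition edges :: "'a graph \<Rightarrow> 'a set set" where "edges G = snd G"

definition adj :: "'a graph \<Rightarrow> 'a \<Rightarrow> 'a \<Rightarrow> bool" where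
  "adj G u v \<longleftrightarrow> {u, v} \<in> edges G"

definition simple_graph :: "'a graph \<Rightarrow> bool" where
  "simple_graph G \<longleftrightarrow> finite (verts G) \<and>
     (\<forall>e\<in>edges G. \<exists>u v. u \<noteq> v \<and> u \<in> verts G \<and> v \<in> verts G \<and> e = {u, v})"

definition chromatic_number :: "'a graph \<Rightarrow> nat" where
  "chromatic_number G = (LEAST k. \<exists>c :: 'a \<Rightarrow> nat.
      (\<forall>v\<in>verts G. c v < k) \<and> (\<forall>u\<in>verts G. \<forall>v\<in>verts G. adj G u v \<longrightarrow> c u \<noteq> c v))"

definition walk :: "'a graph \<Rightarrow> 'a list \<Rightarrow> bool" where
  "walk G p \<longleftrightarrow> p \<noteq> [] \<and> set p \<subseteq> verts G \<and>
     (\<forall>i. Suc i < length p \<longrightarrow> adj G (p ! i) (p ! Suc i))"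

definition connected_graph :: "'a graph \<Rightarrow> bool" where
  "connected_graph G \<longleftrightarrow> verts G \<noteq> {} \<and>
     (\<forall>u\<in>verts G. \<forall>v\<in>verts G. \<exists>p. walk G p \<and> hd p = u \<and> last p = v)"

definition dist :: "'a graph \<Rightarrow> 'a \<Rightarrow> 'a \<Rightarrow> nat" where
  "dist G u v = (LEAST n. \<exists>p. walk G p \<and> hd p = u \<and> last p = v \<and> length p = Suc n)"

definition local_resolving :: "'a graph \<Rightarrow> 'a set \<Rightarrow> bool" where
  "local_resolving G W \<longleftrightarrow> W \<subseteq> verts G \<and>
     (\<forall>u\<in>verts G. \<forall>v\<in>verts G. adj G u v \<longrightarrow> (\<exists>w\<in>W. dist G w u \<noteq> dist G w v))"

definition local_metric_dim :: "'a graph \<Rightarrow> nat" where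
  "local_metric_dim G = (LEAST k. \<exists>W. local_resolving G W \<and> card W = k)"

definition local_metric_basis :: "'a graph \<Rightarrow> 'a set \<Rightarrow> bool" where
  "local_metric_basis G B \<longleftrightarrow> local_resolving G B \<and> card B = local_metric_dim G"

definition induced_embedding :: "'a graph \<Rightarrow> 'b graph \<Rightarrow> ('a \<Rightarrow> 'b) \<Rightarrow> bool" where
  "induced_embedding J G f \<longleftrightarrow> inj_on f (verts J) \<and> f ` verts J \<subseteq> verts G \<and>
     (\<forall>u\<in>verts J. \<forall>v\<in>verts J. adj J u v \<longleftrightarrow> adj G (f u) (f v))"

end

theory Submission
  imports Defs
begin


lemma adj_sym: "adj G u v \<longleftrightarrow> adj G v u"
  by (simp add: adj_def insert_commute)

lemma adj_irrefl: "simple_graph G \<Longrightarrow> \<not> adj G u u"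
  unfolding simple_graph_def adj_def by (metis doubleton_eq_iff insert_absorb2)

lemma adj_verts: "simple_graph G \<Longrightarrow> adj G u v \<Longrightarrow> u \<in> verts G \<and> v \<in> verts G"
  unfolding simple_graph_def adj_def by (metis doubleton_eq_iff)

lemma walk_snoc:
  assumes "q \<noteq> []"
  shows "walk G (q @ [x]) \<longleftrightarrow> walk G q \<and> x \<in> verts G \<and> adj G (last q) x"
proof
  assume w: "walk G (q @ [x])"
  have "walk G q"
    unfolding walk_def
  proof (intro conjI allI impI)
    show "q \<noteq> []" by fact
    show "set q \<subseteq> verts G" using w by (auto simp: walk_def)
    fix i assume "Suc i < length q"
    then show "adj G (q ! i) (q ! Suc i)" using w[unfolded walk_def]
      by (metis (no_types, lifting) Suc_lessD length_append_singleton less_SucI nth_append_left)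
  qed
  moreover have "adj G (last q) x"
  proof -
    have "Suc (length q - 1) < length (q @ [x])" using assms by simp
    then have "adj G ((q@[x]) ! (length q - 1)) ((q@[x]) ! Suc (length q - 1))"
      using w by (simp add: walk_def)
    then show ?thesis using assms by (simp add: nth_append last_conv_nth)
  qed
  ultimately show "walk G q \<and> x \<in> verts G \<and> adj G (last q) x" using w by (auto simp: walk_def)
next
  assume h: "walk G q \<and> x \<in> verts G \<and> adj G (last q) x"
  show "walk G (q @ [x])"
    unfolding walk_def
  proof (intro conjI allI impI)
    show "q @ [x] \<noteq> []" by simp
    show "set (q @ [x]) \<subseteq> verts G" using h by (auto simp: walk_def)
    fix i assume i: "Suc i < length (q @ [x])"
    show "adj G ((q @ [x]) ! i) ((q @ [x]) ! Suc i)"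
    proof (cases "Suc i < length q")
      case True then show ?thesis using h by (simp add: walk_def nth_append)
    next
      case False
      then have "Suc i = length q" using i by simp
      then have "i = length q - 1" by simp
      then show ?thesis using h assms by (simp add: nth_append last_conv_nth)
    qed
  qed
qed

lemma walk_ex:
  assumes "connected_graph G" "u \<in> verts G" "v \<in> verts G"
  shows "\<exists>n p. walk G p \<and> hd p = u \<and> last p = v \<and> length p = Suc n"
proof -
  obtain p where "walk G p" "hd p = u" "last p = v" using assms by (auto simp: connected_graph_def)
  moreover then have "length p = Suc (length p - 1)" by (cases p) (auto simp: walk_def)
  ultimately show ?thesis by blast
qed

lemma dist_witness:
  assumes "connected_graph G" "u \<in> verts G" "v \<in> verts G"
  shows "\<exists>p. walk G p \<and> hd p = u \<and> last p = v \<and> length p = Suc (dist G u v)"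
  unfolding dist_def using walk_ex[OF assms] by (rule LeastI_ex)

lemma dist_le:
  assumes "walk G p" "hd p = u" "last p = v" "length p = Suc n"
  shows "dist G u v \<le> n"
  unfolding dist_def using assms by (intro Least_le) blast

lemma dist_self: "u \<in> verts G \<Longrightarrow> dist G u u = 0"
  using dist_le[of G "[u]" u u 0] by (simp add: walk_def)

lemma dist_0:
  assumes "connected_graph G" "u \<in> verts G" "v \<in> verts G" "dist G u v = 0"
  shows "u = v"
  using dist_witness[OF assms(1-3)] assms(4) by (auto simp: length_Suc_conv)

lemma dist_adj:
  assumes "simple_graph G" "connected_graph G" "adj G u v"
  shows "dist G u v = 1"
proof -
  have uv: "u \<in> verts G" "v \<in> verts G" "u \<noteq> v"
    using adj_verts[OF assms(1,3)] adj_irrefl[OF assms(1)] assms(3) by auto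
  have "walk G [u, v]" using uv assms(3) by (auto simp: walk_def nth_Cons split: nat.splits)
  then have "dist G u v \<le> 1" by (intro dist_le[of G "[u,v]"]) auto
  moreover have "dist G u v \<noteq> 0" using dist_0[OF assms(2) uv(1,2)] uv(3) by blast
  ultimately show ?thesis by simp
qed

lemma dist_1:
  assumes "connected_graph G" "u \<in> verts G" "v \<in> verts G" "dist G u v = 1"
  shows "adj G u v"
proof -
  obtain p where p: "walk G p" "hd p = u" "last p = v" "length p = 2"
    using dist_witness[OF assms(1-3)] assms(4) by auto
  then obtain a b where "p = [a, b]" by (auto simp: length_Suc_conv numeral_2_eq_2)
  then show ?thesis using p by (auto simp: walk_def)
qed

lemma dist_step:
  assumes "connected_graph G" "w \<in> verts G" "adj G a b" "a \<in> verts G" "b \<in> verts G"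
  shows "dist G w b \<le> dist G w a + 1"
proof -
  obtain p where p: "walk G p" "hd p = w" "last p = a" "length p = Suc (dist G w a)"
    using dist_witness[OF assms(1,2,4)] by auto
  have ne: "p \<noteq> []" using p by (auto simp: walk_def)
  have "walk G (p @ [b])" using walk_snoc[OF ne] p assms by simp
  then show ?thesis using ne p by (intro dist_le[of G "p @ [b]"]) auto
qed

lemma dist_twin_le:
  assumes sg: "simple_graph G" and cg: "connected_graph G"
    and tw: "\<And>y. y \<noteq> u \<Longrightarrow> y \<noteq> v \<Longrightarrow> adj G u y \<longleftrightarrow> adj G v y"
    and uv: "adj G u v" and w: "w \<in> verts G" "w \<noteq> u"
  shows "dist G w v \<le> dist G w u"
proof -
  have vs: "u \<in> verts G" "v \<in> verts G" using adj_verts[OF sg uv] by auto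
  obtain p where p: "walk G p" "hd p = w" "last p = u" "length p = Suc (dist G w u)"
    using dist_witness[OF cg w(1) vs(1)] by auto
  have "p \<noteq> []" using p by (auto simp: walk_def)
  then obtain q where q: "p = q @ [u]" using p(3) by (metis append_butlast_last_id)
  have qne: "q \<noteq> []" using q p w(2) by auto
  have wq: "walk G q" "adj G (last q) u" using walk_snoc[OF qne] p q by auto
  have hq: "hd q = w" using q qne p by simp
  show ?thesis
  proof (cases "last q = v")
    case True
    have "dist G w v \<le> length q - 1"
      using qne hq True wq by (intro dist_le[of G q]) auto
    then show ?thesis using q p by simp
  next
    case False
    have "last q \<noteq> u" using wq adj_irrefl[OF sg] by auto
    then have "adj G v (last q)" using tw[OF _ False] wq adj_sym by metis
    then have "walk G (q @ [v])" using walk_snoc[OF qne] wq vs adj_sym by metis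
    then have "dist G w v \<le> length q"
      using qne hq by (intro dist_le[of G "q @ [v]"]) auto
    then show ?thesis using q p by simp
  qed
qed

lemma dist_twin:
  assumes sg: "simple_graph G" and cg: "connected_graph G"
    and tw: "\<And>y. y \<noteq> u \<Longrightarrow> y \<noteq> v \<Longrightarrow> adj G u y \<longleftrightarrow> adj G v y"
    and uv: "adj G u v" and w: "w \<in> verts G" "w \<noteq> u" "w \<noteq> v"
  shows "dist G w v = dist G w u"
proof -
  have "dist G w v \<le> dist G w u" using dist_twin_le[OF sg cg tw uv w(1,2)] by blast
  moreover have "dist G w u \<le> dist G w v"
    using dist_twin_le[OF sg cg _ _ w(1,3), of u] tw uv adj_sym by metis
  ultimately show ?thesis by simp
qed



definition mk :: "'b set \<Rightarrow> ('b \<Rightarrow> 'b \<Rightarrow> bool) \<Rightarrow> 'b graph" where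
  "mk V R = (V, {{x, y} | x y. x \<in> V \<and> y \<in> V \<and> R x y})"

lemma verts_mk[simp]: "verts (mk V R) = V" by (simp add: mk_def verts_def)

lemma adj_mk:
  assumes "\<And>x y. R x y \<Longrightarrow> R y x"
  shows "adj (mk V R) x y \<longleftrightarrow> x \<in> V \<and> y \<in> V \<and> R x y"
  unfolding adj_def mk_def edges_def using assms by (auto simp: doubleton_eq_iff)

lemma simple_mk:
  assumes "finite V" "\<And>x. \<not> R x x"
  shows "simple_graph (mk V R)"
  unfolding simple_graph_def using assms by (auto simp: mk_def edges_def verts_def) metis

lemma rtr_walk:
  assumes "simple_graph G" "(adj G)\<^sup>*\<^sup>* u v" "u \<in> verts G"
  shows "\<exists>p. walk G p \<and> hd p = u \<and> last p = v"
  using assms(2)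
proof (induction rule: rtranclp_induct)
  case base then show ?case using assms(3) by (intro exI[of _ "[u]"]) (auto simp: walk_def)
next
  case (step y z)
  then obtain p where p: "walk G p" "hd p = u" "last p = y" by blast
  have ne: "p \<noteq> []" using p by (auto simp: walk_def)
  have "z \<in> verts G" using adj_verts[OF assms(1) step(2)] by simp
  then have "walk G (p @ [z])" using walk_snoc[OF ne] p step(2) by simp
  then show ?case using ne p by (intro exI[of _ "p @ [z]"]) auto
qed

lemma connected_from:
  assumes sg: "simple_graph G" and z: "z \<in> verts G"
    and r: "\<And>v. v \<in> verts G \<Longrightarrow> (adj G)\<^sup>*\<^sup>* z v"
  shows "connected_graph G"
  unfolding connected_graph_def
proof (intro conjI ballI)
  show "verts G \<noteq> {}" using z by auto
  fix u v assume uv: "u \<in> verts G" "v \<in> verts G"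
  have sym: "(adj G)\<inverse>\<inverse> = adj G" by (auto simp: fun_eq_iff intro: iffD1[OF adj_sym])
  have "(adj G)\<inverse>\<inverse>\<^sup>*\<^sup>* u z" using r[OF uv(1)] by (rule rtranclp_converseI)
  then have "(adj G)\<^sup>*\<^sup>* u z" using sym by simp
  then have "(adj G)\<^sup>*\<^sup>* u v" using r[OF uv(2)] by simp
  then show "\<exists>p. walk G p \<and> hd p = u \<and> last p = v" using rtr_walk[OF sg _ uv(1)] by blast
qed

definition res_ok :: "'b graph \<Rightarrow> 'b set \<Rightarrow> 'b \<Rightarrow> 'b \<Rightarrow> bool" where
  "res_ok G W x y \<longleftrightarrow> (\<exists>w\<in>W. w = x \<or> w = y \<or> (adj G w x \<and> \<not> adj G w y \<and> w \<noteq> y)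
      \<or> (adj G w y \<and> \<not> adj G w x \<and> w \<noteq> x))"

lemma res_okI:
  assumes sg: "simple_graph G" and cg: "connected_graph G" and W: "W \<subseteq> verts G"
    and ok: "\<And>x y. adj G x y \<Longrightarrow> res_ok G W x y"
  shows "local_resolving G W"
  unfolding local_resolving_def
proof (intro conjI ballI impI)
  show "W \<subseteq> verts G" by fact
  fix x y assume xy: "x \<in> verts G" "y \<in> verts G" "adj G x y"
  have ne: "x \<noteq> y" using adj_irrefl[OF sg] xy by auto
  obtain w where w: "w \<in> W" and c: "w = x \<or> w = y \<or> (adj G w x \<and> \<not> adj G w y \<and> w \<noteq> y)
      \<or> (adj G w y \<and> \<not> adj G w x \<and> w \<noteq> x)" using ok[OF xy(3)] unfolding res_ok_def by blast
  have wv: "w \<in> verts G" using w W by auto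
  have "dist G w x \<noteq> dist G w y"
  proof -
    { assume "w = x" then have ?thesis using dist_self[OF xy(1)] dist_0[OF cg wv xy(2)] ne by fastforce }
    moreover
    { assume "w = y" then have ?thesis using dist_self[OF xy(2)] dist_0[OF cg wv xy(1)] ne by fastforce }
    moreover
    { assume a: "adj G w x \<and> \<not> adj G w y \<and> w \<noteq> y"
      then have ?thesis using dist_adj[OF sg cg, of w x] dist_1[OF cg wv xy(2)] by auto }
    moreover
    { assume a: "adj G w y \<and> \<not> adj G w x \<and> w \<noteq> x"
      then have ?thesis using dist_adj[OF sg cg, of w y] dist_1[OF cg wv xy(1)] by auto }
    ultimately show ?thesis using c by blast
  qed
  then show "\<exists>w\<in>W. dist G w x \<noteq> dist G w y" using w by blast
qed

lemma dim_eq: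
  assumes "local_resolving G W0" "card W0 = m"
    and "\<And>W. local_resolving G W \<Longrightarrow> m \<le> card W"
  shows "local_metric_dim G = m" "local_metric_basis G W0"
proof -
  show "local_metric_dim G = m"
    unfolding local_metric_dim_def
    by (rule Least_equality) (use assms in auto)
  then show "local_metric_basis G W0" using assms by (simp add: local_metric_basis_def)
qed

lemma resolving_finite: "simple_graph G \<Longrightarrow> local_resolving G W \<Longrightarrow> finite W"
  unfolding local_resolving_def simple_graph_def using finite_subset by blast



lemma res_ok_sym: "res_ok G W x y \<Longrightarrow> res_ok G W y x"
  unfolding res_ok_def by blast

definition concl :: "'a graph \<Rightarrow> nat \<Rightarrow> bool" where
  "concl J m \<longleftrightarrow> (\<exists>(G :: nat graph) f. simple_graph G \<and> connected_graph G \<and>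
           induced_embedding J G f \<and>
           local_metric_dim G = m \<and>
           (\<exists>B. local_metric_basis G B \<and> B \<inter> f ` verts J = {}))"

locale sgx =
  fixes J :: "'a graph" and N m :: nat and g :: "'a \<Rightarrow> nat" and RJ :: "nat \<Rightarrow> nat \<Rightarrow> bool"
    and col :: "nat \<Rightarrow> nat"
  assumes RJsym: "\<And>x y. RJ x y \<Longrightarrow> RJ y x"
    and RJirr: "\<And>x. \<not> RJ x x"
    and RJcol: "\<And>x y. RJ x y \<Longrightarrow> x < N \<and> y < N \<and> col x \<noteq> col y"
    and colm: "\<And>x. x < N \<Longrightarrow> col x < m"
    and ginj: "inj_on g (verts J)" and gim: "g ` verts J = {..<N}"
    and gadj: "\<And>u v. u \<in> verts J \<Longrightarrow> v \<in> verts J \<Longrightarrow> adj J u v \<longleftrightarrow> RJ (g u) (g v)"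
begin

lemma finish:
  fixes V :: "nat set" and R and W0
  assumes fin: "finite V" and Rsym: "\<And>x y. R x y \<Longrightarrow> R y x" and Rirr: "\<And>x. \<not> R x x"
    and NV: "{..<N} \<subseteq> V" and RR: "\<And>x y. x < N \<Longrightarrow> y < N \<Longrightarrow> R x y \<longleftrightarrow> RJ x y"
    and cg: "connected_graph (mk V R)"
    and res: "local_resolving (mk V R) W0" and cW: "card W0 = m"
    and lb: "\<And>W. local_resolving (mk V R) W \<Longrightarrow> m \<le> card W"
    and disj: "W0 \<inter> {..<N} = {}"
  shows "concl J m"
proof -
  let ?G = "mk V R"
  have sg: "simple_graph ?G" using simple_mk[OF fin] Rirr by blast
  have emb: "induced_embedding J ?G g"
    unfolding induced_embedding_def
  proof (intro conjI ballI)
    show "inj_on g (verts J)" by (rule ginj)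
    show "g ` verts J \<subseteq> verts ?G" using gim NV by simp
    fix u v assume uv: "u \<in> verts J" "v \<in> verts J"
    have "g u < N" "g v < N" using gim uv by auto
    then show "adj J u v \<longleftrightarrow> adj ?G (g u) (g v)"
      using gadj[OF uv] adj_mk[of R, OF Rsym] RR NV by auto
  qed
  have "local_metric_dim ?G = m" "local_metric_basis ?G W0" using dim_eq[OF res cW lb] by auto
  then show ?thesis unfolding concl_def using sg cg emb disj gim by (intro exI[of _ ?G] exI[of _ g]) auto
qed

end



context sgx
begin

lemma case0: assumes "m = 0" shows "concl J m"
proof -
  have N0: "N = 0" using colm[of 0] assms by (cases N) auto
  let ?R = "\<lambda>x y::nat. False"
  have cg: "connected_graph (mk {0} ?R)"
    by (rule connected_from[of _ 0]) (auto intro: simple_mk)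
  have res: "local_resolving (mk {0} ?R) {}"
    by (simp add: local_resolving_def adj_mk)
  show ?thesis
    by (rule finish[OF _ _ _ _ _ cg res]) (use N0 assms RJcol in auto)
qed

lemma case1: assumes "m = 1" shows "concl J m"
proof -
  let ?V = "{..<N+2}"
  let ?R = "\<lambda>x y::nat. (x = N \<and> y \<noteq> N) \<or> (y = N \<and> x \<noteq> N)"
  let ?G = "mk ?V ?R"
  have sym: "\<And>x y. ?R x y \<Longrightarrow> ?R y x" by blast
  have sg: "simple_graph ?G" by (rule simple_mk) auto
  note A = adj_mk[of ?R, OF sym]
  have cg: "connected_graph ?G"
  proof (rule connected_from[OF sg, of N])
    fix v assume "v \<in> verts ?G"
    then show "(adj ?G)\<^sup>*\<^sup>* N v" by (cases "v = N") (auto simp: A)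
  qed simp
  have res: "local_resolving ?G {N}"
    by (rule res_okI[OF sg cg]) (auto simp: A res_ok_def)
  have RJf: "\<And>x y. \<not> RJ x y" using RJcol colm assms by fastforce
  show ?thesis
  proof (rule finish[OF _ _ _ _ _ cg res])
    fix W assume W: "local_resolving ?G W"
    have "adj ?G N (N+1)" by (simp add: A)
    then have "W \<noteq> {}" using W by (auto simp: local_resolving_def)
    then show "m \<le> card W" using resolving_finite[OF sg W] assms by (simp add: Suc_leI card_gt_0_iff)
  qed (use RJf assms in auto)
qed

lemma case2: assumes "m = 2" shows "concl J m"
proof -
  let ?V = "{..<N+3}"
  define Q where "Q = (\<lambda>x y::nat. (x < N \<and> y = N + col x) \<or> (x = N \<and> y = N+1) \<or> (x = N+2 \<and> (y = N \<or> y = N+1)))"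
  define R where "R = (\<lambda>x y. RJ x y \<or> Q x y \<or> Q y x)"
  let ?G = "mk ?V R"
  have sym: "\<And>x y. R x y \<Longrightarrow> R y x" using RJsym unfolding R_def by blast
  have irr: "\<And>x. \<not> R x x" using RJirr colm assms unfolding R_def Q_def by fastforce
  have sg: "simple_graph ?G" by (rule simple_mk) (auto simp: irr)
  have A: "\<And>x y. adj ?G x y \<longleftrightarrow> x \<in> ?V \<and> y \<in> ?V \<and> R x y"
    by (rule adj_mk, erule sym)
  have cm: "\<And>x. x < N \<Longrightarrow> col x = 0 \<or> col x = 1" using colm assms by fastforce
  have ab: "adj ?G N (N+1)" "adj ?G N (N+2)" "adj ?G (N+1) (N+2)"
    unfolding A by (auto simp: R_def Q_def)
  have cg: "connected_graph ?G"
  proof (rule connected_from[OF sg, of N])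
    fix v assume v: "v \<in> verts ?G"
    have r1: "(adj ?G)\<^sup>*\<^sup>* N (N+1)" using ab(1) by (rule r_into_rtranclp)
    show "(adj ?G)\<^sup>*\<^sup>* N v"
    proof (cases "v < N")
      case True
      have av: "adj ?G (N + col v) v" unfolding A using True cm[OF True] by (auto simp: R_def Q_def)
      show ?thesis
      proof (cases "col v = 0")
        case True then have "adj ?G N v" using av by simp
        then show ?thesis by (rule r_into_rtranclp)
      next
        case False then have "col v = 1" using cm[OF \<open>v < N\<close>] by simp
        then have "adj ?G (N+1) v" using av by simp
        then show ?thesis by (rule rtranclp.rtrancl_into_rtrancl[OF r1])
      qed
    next
      case False
      then have "v = N \<or> v = N+1 \<or> v = N+2" using v by auto
      then show ?thesis using ab(1,2) by (metis r_into_rtranclp rtranclp.rtrancl_refl)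
    qed
  qed simp
  have res: "local_resolving ?G {N, N+1}"
  proof (rule res_okI[OF sg cg])
    fix x y assume xy: "adj ?G x y"
    show "res_ok ?G {N, N+1} x y"
    proof (cases "RJ x y")
      case True
      then have c: "x < N" "y < N" "col x \<noteq> col y" using RJcol by auto
      have "adj ?G (N + col x) x" unfolding A using c cm[OF c(1)] by (auto simp: R_def Q_def)
      moreover have "\<not> adj ?G (N + col x) y" unfolding A using c RJcol by (auto simp: R_def Q_def)
      moreover have "N + col x \<in> {N, N+1}" using cm c by auto
      ultimately show ?thesis unfolding res_ok_def using c by blast
    next
      case False
      then have "Q x y \<or> Q y x" using xy unfolding A by (auto simp: R_def)
      then have "x \<in> {N, N+1} \<or> y \<in> {N, N+1}" using cm unfolding Q_def by fastforce
      then show ?thesis unfolding res_ok_def by blast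
    qed
  qed simp
  have RR: "\<And>x y. x < N \<Longrightarrow> y < N \<Longrightarrow> R x y \<longleftrightarrow> RJ x y"
    unfolding R_def Q_def by auto
  have cW: "card {N, N+1} = m" using assms by simp
  have fin: "finite ?V" by simp
  have NV: "{..<N} \<subseteq> ?V" by auto
  have disj: "{N, N+1} \<inter> {..<N} = {}" by auto
  show ?thesis
  proof (rule finish[OF fin sym irr NV RR cg res cW _ disj])
    fix W assume W: "local_resolving ?G W"
    have fW: "finite W" using resolving_finite[OF sg W] .
    show "m \<le> card W"
    proof (rule ccontr)
      assume "\<not> m \<le> card W"
      then have c: "card W < 2" using assms by simp
      obtain z where z: "z \<in> W" "dist ?G z N \<noteq> dist ?G z (N+1)"
        using W ab(1) adj_verts[OF sg ab(1)] unfolding local_resolving_def by blast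
      then have "card W \<noteq> 0" using fW by auto
      then have "card W = 1" using c by simp
      then have Wz: "W = {z}" using z by (auto simp: card_Suc_eq)
      have zv: "z \<in> verts ?G" using W z by (auto simp: local_resolving_def)
      have LR: "\<And>u v. adj ?G u v \<Longrightarrow> dist ?G z u \<noteq> dist ?G z v"
        using W Wz adj_verts[OF sg] unfolding local_resolving_def by blast
      have ab': "adj ?G (N+1) N" "adj ?G (N+2) N" "adj ?G (N+2) (N+1)"
        using ab by (simp_all only: adj_sym[of _ _ N] adj_sym[of _ "N+2" "N+1"])
      have "dist ?G z (N+1) \<noteq> dist ?G z (N+2)" "dist ?G z N \<noteq> dist ?G z (N+2)"
        using LR ab by auto
      moreover have "dist ?G z (N+1) \<le> dist ?G z N + 1" "dist ?G z N \<le> dist ?G z (N+1) + 1"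
         "dist ?G z (N+2) \<le> dist ?G z N + 1" "dist ?G z N \<le> dist ?G z (N+2) + 1"
         "dist ?G z (N+2) \<le> dist ?G z (N+1) + 1" "dist ?G z (N+1) \<le> dist ?G z (N+2) + 1"
        using dist_step[OF cg zv, of N "N+1"] dist_step[OF cg zv, of "N+1" N]
              dist_step[OF cg zv, of N "N+2"] dist_step[OF cg zv, of "N+2" N]
              dist_step[OF cg zv, of "N+1" "N+2"] dist_step[OF cg zv, of "N+2" "N+1"]
              ab ab' by auto
      ultimately show False using z(2) by linarith
    qed
  qed
qed

end



context sgx
begin

lemma case3: assumes m3: "3 \<le> m" shows "concl J m"
proof -
  define K where "K = N + 2"
  define V where "V = {..<K + 2*m}"
  define cl where "cl = (\<lambda>x. if x < N then col x else x - N)"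
  define P where "P = (\<lambda>x y. (x < K \<and> K \<le> y \<and> cl x \<noteq> (y - K) div 2) \<or> (K \<le> x \<and> y = Suc x \<and> even (x - K)))"
  define R where "R = (\<lambda>x y. RJ x y \<or> P x y \<or> P y x)"
  let ?G = "mk V R"
  have sym: "\<And>x y. R x y \<Longrightarrow> R y x" using RJsym unfolding R_def by blast
  have irr: "\<And>x. \<not> R x x" using RJirr unfolding R_def P_def by auto
  have fin: "finite V" unfolding V_def by simp
  have sg: "simple_graph ?G" by (rule simple_mk[OF fin irr])
  have A: "\<And>x y. adj ?G x y \<longleftrightarrow> x \<in> V \<and> y \<in> V \<and> R x y"
    by (rule adj_mk, erule sym)
  have RJN: "\<And>x y. RJ x y \<Longrightarrow> x < N \<and> y < N" using RJcol by blast
  have RJK: "\<And>x b. \<not> RJ x (K+b)" "\<And>x b. \<not> RJ (K+b) x"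
    using RJN unfolding K_def by (metis add_lessD1 less_add_Suc2 add_2_eq_Suc not_less_eq less_irrefl)+
  have RLL: "\<And>x y. x < K \<Longrightarrow> y < K \<Longrightarrow> R x y \<longleftrightarrow> RJ x y"
    unfolding R_def P_def by auto
  have RLH: "\<And>x b. x < K \<Longrightarrow> R x (K + b) \<longleftrightarrow> cl x \<noteq> b div 2"
    unfolding R_def P_def using RJK by auto
  have RHL: "\<And>x b. x < K \<Longrightarrow> R (K + b) x \<longleftrightarrow> cl x \<noteq> b div 2"
    using RLH sym by blast
  have RHH: "\<And>a b. R (K + a) (K + b) \<longleftrightarrow> a div 2 = b div 2 \<and> a \<noteq> b"
  proof -
    fix a b
    have "R (K + a) (K + b) \<longleftrightarrow> (b = Suc a \<and> even a) \<or> (a = Suc b \<and> even b)"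
      unfolding R_def P_def using RJK by auto
    also have "\<dots> \<longleftrightarrow> a div 2 = b div 2 \<and> a \<noteq> b" by presburger
    finally show "R (K + a) (K + b) \<longleftrightarrow> a div 2 = b div 2 \<and> a \<noteq> b" .
  qed
  have inV: "\<And>x. x \<in> V \<longleftrightarrow> x < K + 2*m" unfolding V_def by simp
  have KV: "\<And>x. x < K \<Longrightarrow> x \<in> V" using inV by simp
  have splitV: "\<And>v. v \<in> V \<Longrightarrow> v < K \<or> (\<exists>b. b < 2*m \<and> v = K + b)"
    using inV by (metis add_diff_inverse_nat nat_add_left_cancel_less)
  have tw: "\<And>i y. i < m \<Longrightarrow> y \<noteq> K + 2*i \<Longrightarrow> y \<noteq> K + (2*i+1) \<Longrightarrow>
      adj ?G (K + 2*i) y \<longleftrightarrow> adj ?G (K + (2*i+1)) y"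
  proof -
    fix i y assume i: "i < m" and y: "y \<noteq> K + 2*i" "y \<noteq> K + (2*i+1)"
    have v1: "K + 2*i \<in> V" "K + (2*i+1) \<in> V" using i inV by auto
    show "adj ?G (K + 2*i) y \<longleftrightarrow> adj ?G (K + (2*i+1)) y"
    proof (cases "y < K")
      case True
      then show ?thesis unfolding A using v1 RHL[OF True, of "2*i"] RHL[OF True, of "2*i+1"] by simp
    next
      case False
      then obtain b where b: "y = K + b" by (metis le_add_diff_inverse not_less)
      have "R (K + 2*i) (K+b) \<longleftrightarrow> R (K + (2*i+1)) (K+b)" unfolding RHH using y b by auto
      then show ?thesis unfolding A using v1 b by simp
    qed
  qed
  have tedge: "\<And>i. i < m \<Longrightarrow> adj ?G (K + 2*i) (K + (2*i+1))"
  proof -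
    fix i assume "i < m"
    moreover have "R (K + 2*i) (K + (2*i+1))" unfolding RHH by simp
    ultimately show "adj ?G (K + 2*i) (K + (2*i+1))" unfolding A inV by simp
  qed
  have clN: "cl N = 0" "cl (N+1) = 1" unfolding cl_def by auto
  have NK: "N < K" "N + 1 < K" unfolding K_def by auto
  have adjNW: "\<And>j. j < m \<Longrightarrow> adj ?G N (K + 2*j) \<longleftrightarrow> j \<noteq> 0"
    unfolding A using RLH[OF NK(1)] clN inV NK by auto
  have adjN1W: "\<And>j. j < m \<Longrightarrow> adj ?G (N+1) (K + 2*j) \<longleftrightarrow> j \<noteq> 1"
    unfolding A using RLH[OF NK(2)] clN inV NK by auto
  have reachW: "\<And>j. j < m \<Longrightarrow> (adj ?G)\<^sup>*\<^sup>* N (K + 2*j)"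
  proof -
    fix j assume j: "j < m"
    show "(adj ?G)\<^sup>*\<^sup>* N (K + 2*j)"
    proof (cases "j = 0")
      case False then show ?thesis using adjNW[OF j] by (simp add: r_into_rtranclp)
    next
      case True
      have a1: "adj ?G N (K + 2*2)" using adjNW[of 2] m3 by simp
      have "adj ?G (N+1) (K + 2*2)" using adjN1W[of 2] m3 by simp
      then have a2: "adj ?G (K + 2*2) (N+1)" by (subst adj_sym)
      have a3: "adj ?G (N+1) (K + 2*0)" using adjN1W[of 0] m3 by simp
      have "(adj ?G)\<^sup>*\<^sup>* N (K + 2*0)"
        using a1 a2 a3 by (meson r_into_rtranclp rtranclp.rtrancl_into_rtrancl)
      then show ?thesis using True by simp
    qed
  qed
  have cg: "connected_graph ?G"
  proof (rule connected_from[OF sg])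
    show "N \<in> verts ?G" using KV NK by simp
    fix v assume "v \<in> verts ?G"
    then have v: "v \<in> V" by simp
    show "(adj ?G)\<^sup>*\<^sup>* N v"
    proof (cases "v < K")
      case True
      define j where "j = (if cl v = 0 then 1 else (0::nat))"
      have j: "j < m" "cl v \<noteq> j" unfolding j_def using m3 by auto
      have "adj ?G (K + 2*j) v" unfolding A using RHL[OF True, of "2*j"] j inV KV[OF True] by simp
      then show ?thesis by (rule rtranclp.rtrancl_into_rtrancl[OF reachW[OF j(1)]])
    next
      case False
      then obtain b where b: "b < 2*m" "v = K + b" using splitV[OF v] by blast
      show ?thesis
      proof (cases "even b")
        case True
        then have "v = K + 2 * (b div 2)" "b div 2 < m" using b by auto
        then show ?thesis using reachW[of "b div 2"] by simp
      next
        case False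
        have bb: "b = 2 * (b div 2) + 1" using False by presburger
        have e: "v = K + (2 * (b div 2) + 1)" "b div 2 < m" using b bb by (simp, linarith)
        have "(adj ?G)\<^sup>*\<^sup>* N (K + (2 * (b div 2) + 1))"
          by (rule rtranclp.rtrancl_into_rtrancl[OF reachW[OF e(2)] tedge[OF e(2)]])
        then show ?thesis using e(1) by simp
      qed
    qed
  qed
  define W0 where "W0 = (\<lambda>i. K + 2*i) ` {..<m}"
  have W0V: "W0 \<subseteq> V" unfolding W0_def V_def by auto
  have inW0: "\<And>b. b < 2*m \<Longrightarrow> even b \<Longrightarrow> K + b \<in> W0"
  proof -
    fix b :: nat assume "b < 2*m" "even b"
    then have "K + b = K + 2 * (b div 2)" "b div 2 < m" by auto
    then show "K + b \<in> W0" unfolding W0_def by blast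
  qed
  have res: "local_resolving ?G W0"
  proof (rule res_okI[OF sg cg])
    show "W0 \<subseteq> verts ?G" using W0V by simp
    have main: "\<And>x y. adj ?G x y \<Longrightarrow> x < K \<Longrightarrow> res_ok ?G W0 x y"
    proof -
      fix x y assume xy: "adj ?G x y" and x: "x < K"
      have yV: "y \<in> V" and Rxy: "R x y" using xy unfolding A by auto
      show "res_ok ?G W0 x y"
      proof (cases "y < K")
        case True
        then have rj: "RJ x y" using RLL x Rxy by blast
        then have c: "x < N" "y < N" "col x \<noteq> col y" using RJcol by auto
        have cy: "col y < m" using colm c by auto
        let ?w = "K + 2 * col y"
        have "?w \<in> W0" unfolding W0_def using cy by auto
        moreover have "adj ?G ?w x" unfolding A using RHL[OF x, of "2 * col y"] c inV cy KV[OF x]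
          by (simp add: cl_def)
        moreover have "\<not> adj ?G ?w y" unfolding A using RHL[OF True, of "2 * col y"] c
          by (simp add: cl_def)
        moreover have "?w \<noteq> y" using True by simp
        ultimately show ?thesis unfolding res_ok_def by blast
      next
        case False
        then obtain b where b: "b < 2*m" "y = K + b" using splitV[OF yV] by blast
        show ?thesis
        proof (cases "even b")
          case True then show ?thesis using inW0 b unfolding res_ok_def by blast
        next
          case odd: False
          have cx: "cl x \<noteq> b div 2" using Rxy RLH[OF x] b by simp
          define j :: nat where "j = (if 0 \<noteq> b div 2 \<and> 0 \<noteq> cl x then 0
             else if 1 \<noteq> b div 2 \<and> 1 \<noteq> cl x then 1 else 2)"
          have j: "j < 3" "j \<noteq> b div 2" "j \<noteq> cl x" unfolding j_def by auto
          let ?w = "K + 2 * j"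
          have jm: "j < m" using j m3 by simp
          have "?w \<in> W0" unfolding W0_def using jm by auto
          moreover have "adj ?G ?w x" unfolding A using RHL[OF x, of "2 * j"] j inV jm KV[OF x]
            by simp
          moreover have "\<not> adj ?G ?w y" unfolding A using RHH[of "2*j" b] b j by simp
          moreover have "?w \<noteq> y" using b odd by auto
          ultimately show ?thesis unfolding res_ok_def by blast
        qed
      qed
    qed
    fix x y assume xy: "adj ?G x y"
    show "res_ok ?G W0 x y"
    proof (cases "x < K")
      case True show ?thesis by (rule main[OF xy True])
    next
      case xK: False
      show ?thesis
      proof (cases "y < K")
        case True
        have yx: "adj ?G y x" using xy by (subst adj_sym)
        show ?thesis by (rule res_ok_sym[OF main[OF yx True]])
      next
        case False
        have xyV: "x \<in> V" "y \<in> V" and Rxy: "R x y" using xy unfolding A by auto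
        obtain a where a: "a < 2*m" "x = K + a" using splitV[OF xyV(1)] xK by blast
        obtain b where b: "b < 2*m" "y = K + b" using splitV[OF xyV(2)] False by blast
        have "a div 2 = b div 2" "a \<noteq> b" using Rxy RHH a b by auto
        then have "even a \<or> even b" by presburger
        then have "x \<in> W0 \<or> y \<in> W0" using inW0 a b by blast
        then show ?thesis unfolding res_ok_def by blast
      qed
    qed
  qed
  have cW: "card W0 = m" unfolding W0_def by (subst card_image) (auto simp: inj_on_def)
  have lb: "\<And>W. local_resolving ?G W \<Longrightarrow> m \<le> card W"
  proof -
    fix W assume W: "local_resolving ?G W"
    have fW: "finite W" using resolving_finite[OF sg W] .
    have sub: "{..<m} \<subseteq> (\<lambda>z. (z - K) div 2) ` W"
    proof
      fix i assume "i \<in> {..<m}"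
      then have i: "i < m" by simp
      have e: "adj ?G (K + 2*i) (K + (2*i+1))" using tedge[OF i] .
      have uv: "K + 2*i \<in> V" "K + (2*i+1) \<in> V" unfolding V_def using i by auto
      obtain z where z: "z \<in> W" "dist ?G z (K + 2*i) \<noteq> dist ?G z (K + (2*i+1))"
        using W e uv unfolding local_resolving_def verts_mk by blast
      have zV: "z \<in> verts ?G" using W z unfolding local_resolving_def by auto
      have "z = K + 2*i \<or> z = K + (2*i+1)"
      proof (rule ccontr)
        assume "\<not> ?thesis"
        then have "dist ?G z (K + (2*i+1)) = dist ?G z (K + 2*i)"
          using dist_twin[OF sg cg tw[OF i] e zV] by blast
        then show False using z(2) by simp
      qed
      then have "(z - K) div 2 = i" by auto
      then show "i \<in> (\<lambda>z. (z - K) div 2) ` W" using z(1) by blast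
    qed
    have "m = card {..<m}" by simp
    also have "\<dots> \<le> card ((\<lambda>z. (z - K) div 2) ` W)" using sub fW by (intro card_mono) auto
    also have "\<dots> \<le> card W" using fW by (rule card_image_le)
    finally show "m \<le> card W" .
  qed
  have RR: "\<And>x y. x < N \<Longrightarrow> y < N \<Longrightarrow> R x y \<longleftrightarrow> RJ x y" using RLL K_def by simp
  have NV: "{..<N} \<subseteq> V" unfolding V_def K_def by auto
  have disj: "W0 \<inter> {..<N} = {}" unfolding W0_def K_def by auto
  show ?thesis by (rule finish[OF fin sym irr NV RR cg res cW lb disj])
qed

end


theorem lemma8:
  fixes J :: "'a graph" and m :: nat
  assumes "simple_graph J"
    and "m \<ge> chromatic_number J"
  shows "\<exists>(G :: nat graph) f. simple_graph G \<and> connected_graph G \<and>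
           induced_embedding J G f \<and>
           local_metric_dim G = m \<and>
           (\<exists>B. local_metric_basis G B \<and> B \<inter> f ` verts J = {})"
proof -
  note sJ = assms(1)
  define N where "N = card (verts J)"
  have finJ: "finite (verts J)" using sJ by (simp add: simple_graph_def)
  obtain g where g: "bij_betw g (verts J) {0..<N}"
    using ex_bij_betw_finite_nat[OF finJ] unfolding N_def by blast
  define h where "h = inv_into (verts J) g"
  have ginj: "inj_on g (verts J)" and gim: "g ` verts J = {..<N}"
    using g by (auto simp: bij_betw_def atLeast0LessThan)
  have hin: "\<And>x. x < N \<Longrightarrow> h x \<in> verts J"
    unfolding h_def using gim by (metis inv_into_into lessThan_iff)
  have hg: "\<And>u. u \<in> verts J \<Longrightarrow> h (g u) = u" unfolding h_def using ginj by simp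
  have "\<exists>k (c :: 'a \<Rightarrow> nat). (\<forall>v\<in>verts J. c v < k) \<and> (\<forall>u\<in>verts J. \<forall>v\<in>verts J. adj J u v \<longrightarrow> c u \<noteq> c v)"
  proof -
    have "\<forall>v\<in>verts J. g v < N" using gim by auto
    moreover have "\<forall>u\<in>verts J. \<forall>v\<in>verts J. adj J u v \<longrightarrow> g u \<noteq> g v"
      using adj_irrefl[OF sJ] ginj by (metis inj_on_def)
    ultimately show ?thesis by blast
  qed
  then have "\<exists>c :: 'a \<Rightarrow> nat. (\<forall>v\<in>verts J. c v < chromatic_number J) \<and> (\<forall>u\<in>verts J. \<forall>v\<in>verts J. adj J u v \<longrightarrow> c u \<noteq> c v)"
    unfolding chromatic_number_def by (rule LeastI_ex)
  then obtain c :: "'a \<Rightarrow> nat" where c: "\<forall>v\<in>verts J. c v < chromatic_number J"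
     "\<forall>u\<in>verts J. \<forall>v\<in>verts J. adj J u v \<longrightarrow> c u \<noteq> c v" by blast
  define RJ where "RJ = (\<lambda>x y. x < N \<and> y < N \<and> adj J (h x) (h y))"
  define col where "col = (\<lambda>x. c (h x))"
  interpret S: sgx J N m g RJ col
  proof
    show "\<And>x y. RJ x y \<Longrightarrow> RJ y x" unfolding RJ_def using adj_sym by metis
    show "\<And>x. \<not> RJ x x" unfolding RJ_def using adj_irrefl[OF sJ] by blast
    show "\<And>x y. RJ x y \<Longrightarrow> x < N \<and> y < N \<and> col x \<noteq> col y"
      unfolding RJ_def col_def using c(2) hin by blast
    show "\<And>x. x < N \<Longrightarrow> col x < m" unfolding col_def using c(1) hin assms(2)
      by (meson order_less_le_trans)
    show "inj_on g (verts J)" by fact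
    show "g ` verts J = {..<N}" by fact
    show "\<And>u v. u \<in> verts J \<Longrightarrow> v \<in> verts J \<Longrightarrow> adj J u v \<longleftrightarrow> RJ (g u) (g v)"
      unfolding RJ_def using gim hg by auto
  qed
  have "concl J m"
  proof -
    consider "m = 0" | "m = 1" | "m = 2" | "3 \<le> m" by linarith
    then show ?thesis using S.case0 S.case1 S.case2 S.case3 by cases
  qed
  then show ?thesis unfolding concl_def .
qed
end
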